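(* The following parallel merge algorithm mergeHT is correct, i.e. on BSTs $T_1,T_2$ with disjoint keys it returns a BST containing the union of their keys: if $T_1$ is empty return $T_2$; if $T_2$ is empty return $T_1$; otherwise let $k$ be the root key of $T_1$; $(L_2,R_2)=\mathrm{split}(T_2,k)$; $k_1=\max(L_2)$, $k_2=\min(R_2)$; $(L_1,I)=\mathrm{split}(T_1,k_1)$; $(M,R_1)=\mathrm{split}(I,k_2)$; in parallel compute $T_L=\mathrm{mergeHT}(L_1,L_2)$ and $T_R=\mathrm{mergeHT}(R_1,R_2)$; return $\mathrm{join}(\mathrm{join}(T_L,M),T_R)$. Moreover, if merging $T_1$ and $T_2$ requires $T_1$ to be split into $k$ trees $t_1,\dots,t_k$ and $T_2$ into $j$ trees $t'_1,\dots,t'_j$ (the maximal groups of keys of one input that are contiguous in the merged sorted order), then mergeHT performs $O\left(\sum_{i=1}^k\lg(|t_i|+1)+\sum_{i=1}^j\lg(|t'_i|+1)\right)$ work.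
   Context: Trees are heterogeneous finger search trees: $\mathrm{split}(T,k)$ returns the trees of keys of $T$ less than $k$ and greater than $k$; $\mathrm{join}$ of two trees whose key ranges do not interleave returns a BST on their union; both have amortized cost $O(\lg(\min(|T_1|,|T_2|)+1))$ where $T_1,T_2$ are the two smaller trees, and worst-case cost $O(\lg\max(|T_1|,|T_2|))$. Keys are distinct. *)

theory Defs
  imports Complex_Main "HOL-Library.Tree"
begin

text \<open>Big-step semantics (with work accounting) of the algorithm mergeHT, parametric in
  the split and join operations of the underlying trees and their (actual) costs.
  mergeHT_run split join scost jcost T1 T2 T w  means: on inputs T1 T2 the algorithm
  returns T and performs total work w (sum of the costs of all split/join calls plus
  one unit per recursive invocation; parallelism does not affect work).
  If L2 is empty then max(L2) = -infinity, so split(T1,k1) = (empty, T1) and no split is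
  performed; symmetrically if R2 is empty then min(R2) = +infinity.\<close>

inductive mergeHT_run ::
  "('k::linorder tree \<Rightarrow> 'k \<Rightarrow> 'k tree \<times> 'k tree) \<Rightarrow>
   ('k tree \<Rightarrow> 'k tree \<Rightarrow> 'k tree) \<Rightarrow>
   ('k tree \<Rightarrow> 'k \<Rightarrow> real) \<Rightarrow>
   ('k tree \<Rightarrow> 'k tree \<Rightarrow> real) \<Rightarrow>
   'k tree \<Rightarrow> 'k tree \<Rightarrow> 'k tree \<Rightarrow> real \<Rightarrow> bool"
  for split join scost jcost where
  empty1: "mergeHT_run split join scost jcost Leaf T2 T2 1"
| empty2: "T1 \<noteq> Leaf \<Longrightarrow> mergeHT_run split join scost jcost T1 Leaf T1 1"
| node: "\<lbrakk> T1 = Node l k r; T2 \<noteq> Leaf;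
           (L2, R2) = split T2 k;
           (L1, I) = (if L2 = Leaf then (Leaf, T1) else split T1 (Max (set_tree L2)));
           c1 = (if L2 = Leaf then 0 else scost T1 (Max (set_tree L2)));
           (M, R1) = (if R2 = Leaf then (I, Leaf) else split I (Min (set_tree R2)));
           c2 = (if R2 = Leaf then 0 else scost I (Min (set_tree R2)));
           mergeHT_run split join scost jcost L1 L2 TL wL;
           mergeHT_run split join scost jcost R1 R2 TR wR \<rbrakk>
        \<Longrightarrow> mergeHT_run split join scost jcost T1 T2 (join (join TL M) TR)
              (1 + scost T2 k + c1 + c2 + wL + wR + jcost TL M + jcost (join TL M) TR)"

text \<open>The maximal groups of keys of A that are contiguous in the sorted order of A \<union> B
  (two keys of A are in the same group iff no key of B lies strictly between them).\<close>
definition groups :: "'k::linorder set \<Rightarrow> 'k set \<Rightarrow> 'k set set" where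
  "groups A B = {{a' \<in> A. \<not> (\<exists>b\<in>B. min a a' < b \<and> b < max a a')} | a. a \<in> A}"

end

theory Submission
  imports Defs
begin

definition lg :: "nat \<Rightarrow> real" where "lg n = log 2 (real n + 1)"

lemma lg_0[simp]: "lg 0 = 0" by (simp add: lg_def)
lemma lg_nonneg: "0 \<le> lg n" by (simp add: lg_def)
lemma lg_mono: "x \<le> y \<Longrightarrow> lg x \<le> lg y" by (simp add: lg_def)
lemma lg_ge1: "1 \<le> n \<Longrightarrow> 1 \<le> lg n"
proof -
  assume "1 \<le> n"
  hence "log 2 2 \<le> log 2 (real n + 1)" by (subst log_le_cancel_iff) auto
  thus ?thesis by (simp add: lg_def)
qed
lemma lg_add: "lg (x + y) \<le> lg x + lg y"
proof -
  have "log 2 (real (x+y) + 1) \<le> log 2 ((real x + 1) * (real y + 1))"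
    by (subst log_le_cancel_iff) (auto simp: algebra_simps intro: add_pos_nonneg)
  also have "\<dots> = log 2 (real x + 1) + log 2 (real y + 1)" by (rule log_mult_pos) auto
  finally show ?thesis by (simp add: lg_def)
qed
lemma lg_key0: "u \<le> z \<Longrightarrow> lg (u + z) \<le> lg z + 1"
proof -
  assume "u \<le> z"
  have "log 2 (real (u+z) + 1) \<le> log 2 (2 * (real z + 1))"
    using \<open>u \<le> z\<close> by (subst log_le_cancel_iff) auto
  also have "\<dots> = log 2 2 + log 2 (real z + 1)" by (rule log_mult_pos) auto
  finally show ?thesis by (simp add: lg_def)
qed
lemma lg_key: "lg (min u z) + lg (u + z) \<le> lg u + lg z + 1"
proof (cases "u \<le> z")
  case True thus ?thesis using lg_key0[of u z] by (simp add: min_def)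
next
  case False thus ?thesis using lg_key0[of z u] by (simp add: min_def add.commute)
qed
lemma lg_key3: "lg (min (x + y) z) + lg (x + y + z) \<le> lg x + lg y + lg z + 1"
  using lg_key[of "x+y" z] lg_add[of x y] by linarith

definition grp :: "'k::linorder set \<Rightarrow> 'k set \<Rightarrow> 'k \<Rightarrow> 'k set" where
  "grp A B a = {a' \<in> A. \<not> (\<exists>b\<in>B. min a a' < b \<and> b < max a a')}"

lemma groups_eq: "groups A B = grp A B ` A"
  unfolding groups_def grp_def by auto

lemma groups_empty1[simp]: "groups {} B = {}" by (simp add: groups_eq)
lemma groups_empty2: "groups B {} = (if B = {} then {} else {B})"
  by (auto simp: groups_eq grp_def)

lemma grp_sub: "grp A B a \<subseteq> A" by (auto simp: grp_def)
lemma grp_self: "a \<in> A \<Longrightarrow> a \<in> grp A B a" by (auto simp: grp_def)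

lemma groups_decomp:
  fixes A B :: "'k::linorder set"
  assumes fin: "finite B" and disj: "A \<inter> B = {}" and kA: "k \<in> A"
    and BL: "BL = {x\<in>B. x < k}" and BR: "BR = {x\<in>B. k < x}"
    and AL: "AL = {x\<in>A. BL \<noteq> {} \<and> x < Max BL}"
    and AR: "AR = {x\<in>A. BR \<noteq> {} \<and> Min BR < x}"
    and M: "M = {x\<in>A. (BL = {} \<or> Max BL < x) \<and> (BR = {} \<or> x < Min BR)}"
  shows "groups A B = groups AL BL \<union> {M} \<union> groups AR BR"
    and "groups B A = groups BL AL \<union> groups BR AR"
proof -
  have finL: "finite BL" and finR: "finite BR" using fin BL BR by auto
  have kB: "k \<notin> B" using kA disj by auto
  have B_un: "B = BL \<union> BR" using BL BR kB by auto
  have maxL: "BL \<noteq> {} \<Longrightarrow> Max BL \<in> BL \<and> (\<forall>x\<in>BL. x \<le> Max BL)" using finL by auto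
  have minR: "BR \<noteq> {} \<Longrightarrow> Min BR \<in> BR \<and> (\<forall>x\<in>BR. Min BR \<le> x)" using finR by auto
  have MaxB: "BL \<noteq> {} \<Longrightarrow> Max BL \<in> B \<and> Max BL < k" using maxL BL by auto
  have MinB: "BR \<noteq> {} \<Longrightarrow> Min BR \<in> B \<and> k < Min BR" using minR BR by auto
  have A_un: "A = AL \<union> M \<union> AR"
  proof -
    { fix x assume x: "x \<in> A"
      have "x \<in> AL \<or> x \<in> M \<or> x \<in> AR"
      proof -
        have 1: "BL \<noteq> {} \<Longrightarrow> x \<noteq> Max BL" using MaxB x disj by auto
        have 2: "BR \<noteq> {} \<Longrightarrow> x \<noteq> Min BR" using MinB x disj by auto
        show ?thesis using 1 2 x unfolding AL AR M by (auto simp: neq_iff)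
      qed }
    thus ?thesis using AL AR M by auto
  qed
  have gL: "grp A B a = grp AL BL a" if a: "a \<in> AL" for a
  proof -
    have ne: "BL \<noteq> {}" and am: "a < Max BL" and aA: "a \<in> A" using a AL by auto
    show ?thesis
    proof (intro set_eqI iffI)
      fix x assume x: "x \<in> grp A B a"
      hence xA: "x \<in> A" and nb: "\<not> (\<exists>b\<in>B. min a x < b \<and> b < max a x)" by (auto simp: grp_def)
      have "x < Max BL"
      proof (rule ccontr)
        assume "\<not> x < Max BL"
        moreover have "x \<noteq> Max BL" using MaxB[OF ne] xA disj by auto
        ultimately have "Max BL < x" by simp
        hence "min a x = a" "max a x = x" using am by auto
        thus False using nb MaxB[OF ne] am \<open>Max BL < x\<close> by auto
      qed
      hence "x \<in> AL" using xA ne AL by auto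
      thus "x \<in> grp AL BL a" using nb BL by (auto simp: grp_def)
    next
      fix x assume x: "x \<in> grp AL BL a"
      hence xA: "x \<in> AL" and nb: "\<not> (\<exists>b\<in>BL. min a x < b \<and> b < max a x)" by (auto simp: grp_def)
      have "x < Max BL" using xA AL by auto
      hence "\<not> (\<exists>b\<in>B. min a x < b \<and> b < max a x)" using nb BL am MaxB[OF ne]
        by (auto simp: min_def max_def split: if_splits)
      thus "x \<in> grp A B a" using xA AL by (auto simp: grp_def)
    qed
  qed
  have gR: "grp A B a = grp AR BR a" if a: "a \<in> AR" for a
  proof -
    have ne: "BR \<noteq> {}" and am: "Min BR < a" and aA: "a \<in> A" using a AR by auto
    show ?thesis
    proof (intro set_eqI iffI)
      fix x assume x: "x \<in> grp A B a"
      hence xA: "x \<in> A" and nb: "\<not> (\<exists>b\<in>B. min a x < b \<and> b < max a x)" by (auto simp: grp_def)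
      have "Min BR < x"
      proof (rule ccontr)
        assume "\<not> Min BR < x"
        moreover have "x \<noteq> Min BR" using MinB[OF ne] xA disj by auto
        ultimately have "x < Min BR" by simp
        hence "min a x = x" "max a x = a" using am by auto
        thus False using nb MinB[OF ne] am \<open>x < Min BR\<close> by auto
      qed
      hence "x \<in> AR" using xA ne AR by auto
      thus "x \<in> grp AR BR a" using nb BR by (auto simp: grp_def)
    next
      fix x assume x: "x \<in> grp AR BR a"
      hence xA: "x \<in> AR" and nb: "\<not> (\<exists>b\<in>BR. min a x < b \<and> b < max a x)" by (auto simp: grp_def)
      have "Min BR < x" using xA AR by auto
      hence "\<not> (\<exists>b\<in>B. min a x < b \<and> b < max a x)" using nb BR am MinB[OF ne]
        by (auto simp: min_def max_def split: if_splits)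
      thus "x \<in> grp A B a" using xA AR by (auto simp: grp_def)
    qed
  qed
  have gM: "grp A B a = M" if a: "a \<in> M" for a
  proof (intro set_eqI iffI)
    fix x assume x: "x \<in> grp A B a"
    hence xA: "x \<in> A" and nb: "\<not> (\<exists>b\<in>B. min a x < b \<and> b < max a x)" by (auto simp: grp_def)
    have 1: "BL \<noteq> {} \<Longrightarrow> Max BL < x"
    proof (rule ccontr)
      assume ne: "BL \<noteq> {}" and "\<not> Max BL < x"
      moreover have "x \<noteq> Max BL" using MaxB[OF ne] xA disj by auto
      ultimately have "x < Max BL" by simp
      moreover have "Max BL < a" using a M ne by auto
      ultimately have "min a x = x" "max a x = a" by auto
      thus False using nb MaxB[OF ne] \<open>x < Max BL\<close> \<open>Max BL < a\<close> by auto
    qed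
    have 2: "BR \<noteq> {} \<Longrightarrow> x < Min BR"
    proof (rule ccontr)
      assume ne: "BR \<noteq> {}" and "\<not> x < Min BR"
      moreover have "x \<noteq> Min BR" using MinB[OF ne] xA disj by auto
      ultimately have "Min BR < x" by simp
      moreover have "a < Min BR" using a M ne by auto
      ultimately have "min a x = a" "max a x = x" by auto
      thus False using nb MinB[OF ne] \<open>Min BR < x\<close> \<open>a < Min BR\<close> by auto
    qed
    show "x \<in> M" using 1 2 xA M by auto
  next
    fix x assume x: "x \<in> M"
    have "\<not> (\<exists>b\<in>B. min a x < b \<and> b < max a x)"
    proof
      assume "\<exists>b\<in>B. min a x < b \<and> b < max a x"
      then obtain b where b: "b \<in> B" "min a x < b" "b < max a x" by auto
      show False
      proof (cases "b < k")
        case True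
        hence "b \<in> BL" using b BL by auto
        hence "b \<le> Max BL" "BL \<noteq> {}" using maxL by auto
        thus False using a x M b by (auto simp: min_def max_def split: if_splits)
      next
        case False
        hence "b \<in> BR" using b BR kB by (auto simp: neq_iff)
        hence "Min BR \<le> b" "BR \<noteq> {}" using minR by auto
        thus False using a x M b by (auto simp: min_def max_def split: if_splits)
      qed
    qed
    thus "x \<in> grp A B a" using x M by (auto simp: grp_def)
  qed
  have MA: "M \<noteq> {}" using kA M MaxB MinB by auto
  show "groups A B = groups AL BL \<union> {M} \<union> groups AR BR"
  proof -
    have "groups A B = grp A B ` AL \<union> grp A B ` M \<union> grp A B ` AR"
      using A_un by (simp add: groups_eq image_Un)
    also have "grp A B ` AL = groups AL BL" using gL by (simp add: groups_eq)
    also have "grp A B ` AR = groups AR BR" using gR by (simp add: groups_eq)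
    also have "grp A B ` M = {M}" using gM MA by auto
    finally show ?thesis by auto
  qed
  have hL: "grp B A b = grp BL AL b" if b: "b \<in> BL" for b
  proof -
    have ne: "BL \<noteq> {}" and bk: "b < k" and bB: "b \<in> B" using b BL by auto
    have bm: "b \<le> Max BL" using maxL b by auto
    show ?thesis
    proof (intro set_eqI iffI)
      fix x assume x: "x \<in> grp B A b"
      hence xB: "x \<in> B" and nb: "\<not> (\<exists>a\<in>A. min b x < a \<and> a < max b x)" by (auto simp: grp_def)
      have "x < k"
      proof (rule ccontr)
        assume "\<not> x < k"
        moreover have "x \<noteq> k" using xB kB by auto
        ultimately have "k < x" by simp
        hence "min b x = b" "max b x = x" using bk by auto
        thus False using nb kA bk \<open>k < x\<close> by auto
      qed
      hence xL: "x \<in> BL" using xB BL by auto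
      hence "x \<le> Max BL" using maxL by auto
      thus "x \<in> grp BL AL b" using nb xL AL by (auto simp: grp_def)
    next
      fix x assume x: "x \<in> grp BL AL b"
      hence xL: "x \<in> BL" and nb: "\<not> (\<exists>a\<in>AL. min b x < a \<and> a < max b x)" by (auto simp: grp_def)
      have "x \<le> Max BL" using xL maxL by auto
      hence "\<not> (\<exists>a\<in>A. min b x < a \<and> a < max b x)" using nb AL bm ne
        by (auto simp: min_def max_def split: if_splits)
      thus "x \<in> grp B A b" using xL BL by (auto simp: grp_def)
    qed
  qed
  have hR: "grp B A b = grp BR AR b" if b: "b \<in> BR" for b
  proof -
    have ne: "BR \<noteq> {}" and bk: "k < b" and bB: "b \<in> B" using b BR by auto
    have bm: "Min BR \<le> b" using minR b by auto
    show ?thesis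
    proof (intro set_eqI iffI)
      fix x assume x: "x \<in> grp B A b"
      hence xB: "x \<in> B" and nb: "\<not> (\<exists>a\<in>A. min b x < a \<and> a < max b x)" by (auto simp: grp_def)
      have "k < x"
      proof (rule ccontr)
        assume "\<not> k < x"
        moreover have "x \<noteq> k" using xB kB by auto
        ultimately have "x < k" by simp
        hence "min b x = x" "max b x = b" using bk by auto
        thus False using nb kA bk \<open>x < k\<close> by auto
      qed
      hence xL: "x \<in> BR" using xB BR by auto
      hence "Min BR \<le> x" using minR by auto
      thus "x \<in> grp BR AR b" using nb xL AR by (auto simp: grp_def)
    next
      fix x assume x: "x \<in> grp BR AR b"
      hence xL: "x \<in> BR" and nb: "\<not> (\<exists>a\<in>AR. min b x < a \<and> a < max b x)" by (auto simp: grp_def)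
      have "Min BR \<le> x" using xL minR by auto
      hence "\<not> (\<exists>a\<in>A. min b x < a \<and> a < max b x)" using nb AR bm ne
        by (auto simp: min_def max_def split: if_splits)
      thus "x \<in> grp B A b" using xL BR by (auto simp: grp_def)
    qed
  qed
  show "groups B A = groups BL AL \<union> groups BR AR"
    using B_un hL hR by (simp add: groups_eq image_Un)
qed


lemma bst_size: "bst t \<Longrightarrow> size t = card (set_tree t)"
proof -
  assume "bst t"
  hence "distinct (inorder t)" by (simp add: bst_iff_sorted_wrt_less strict_sorted_iff)
  thus ?thesis by (metis distinct_card length_inorder set_inorder)
qed

lemma groups_sub: "S \<in> groups X Y \<Longrightarrow> S \<subseteq> X \<and> S \<noteq> {}"
  by (auto simp: groups_eq grp_def)

definition PP :: "'k::linorder set \<Rightarrow> 'k set \<Rightarrow> real" where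
  "PP A B = (\<Sum>S\<in>groups A B. lg (card S)) + (\<Sum>S\<in>groups B A. lg (card S))"

lemma PP_nonneg: "0 \<le> PP A B"
  unfolding PP_def by (intro add_nonneg_nonneg sum_nonneg) (auto simp: lg_nonneg)

lemma PP_empty1: "PP {} B = lg (card B)"
  by (simp add: PP_def groups_empty2)
lemma PP_empty2: "PP A {} = lg (card A)"
  by (simp add: PP_def groups_empty2)

lemma finite_groups: "finite A \<Longrightarrow> finite (groups A B)" by (simp add: groups_eq)

lemma PP_decomp:
  fixes A B :: "'k::linorder set"
  assumes finA: "finite A" and fin: "finite B" and disj: "A \<inter> B = {}" and kA: "k \<in> A"
    and BL: "BL = {x\<in>B. x < k}" and BR: "BR = {x\<in>B. k < x}"
    and AL: "AL = {x\<in>A. BL \<noteq> {} \<and> x < Max BL}"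
    and AR: "AR = {x\<in>A. BR \<noteq> {} \<and> Min BR < x}"
    and M: "M = {x\<in>A. (BL = {} \<or> Max BL < x) \<and> (BR = {} \<or> x < Min BR)}"
  shows "PP A B = PP AL BL + PP AR BR + lg (card M)"
proof -
  note g = groups_decomp[OF fin disj kA BL BR AL AR M]
  have finL: "finite BL" and finR: "finite BR" using fin BL BR by auto
  have MaxB: "BL \<noteq> {} \<Longrightarrow> Max BL < k" using finL BL by auto
  have MinB: "BR \<noteq> {} \<Longrightarrow> k < Min BR" using finR BR by auto
  have d1: "AL \<inter> AR = {}" using AL AR MaxB MinB by fastforce
  have d2: "AL \<inter> M = {}" using AL M by fastforce
  have d3: "M \<inter> AR = {}" using AR M by fastforce
  have d4: "BL \<inter> BR = {}" using BL BR by fastforce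
  have MA: "M \<noteq> {}" using kA M MaxB MinB by auto
  have fAL: "finite AL" "finite AR" "finite BL" "finite BR" using finA AL AR finL finR by auto
  have e1: "groups AL BL \<inter> groups AR BR = {}"
  proof (rule ccontr)
    assume "groups AL BL \<inter> groups AR BR \<noteq> {}"
    then obtain S where "S \<in> groups AL BL" "S \<in> groups AR BR" by auto
    thus False using groups_sub d1 by blast
  qed
  have e2: "M \<notin> groups AL BL \<union> groups AR BR"
  proof
    assume "M \<in> groups AL BL \<union> groups AR BR"
    thus False using groups_sub[of M] d2 d3 MA by blast
  qed
  have e3: "groups BL AL \<inter> groups BR AR = {}"
  proof (rule ccontr)
    assume "groups BL AL \<inter> groups BR AR \<noteq> {}"
    then obtain S where "S \<in> groups BL AL" "S \<in> groups BR AR" by auto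
    thus False using groups_sub d4 by blast
  qed
  have s1: "(\<Sum>S\<in>groups A B. lg (card S)) =
      (\<Sum>S\<in>groups AL BL. lg (card S)) + (\<Sum>S\<in>groups AR BR. lg (card S)) + lg (card M)"
  proof -
    have "groups A B = insert M (groups AL BL \<union> groups AR BR)" using g(1) by auto
    hence "(\<Sum>S\<in>groups A B. lg (card S)) = lg (card M) + (\<Sum>S\<in>groups AL BL \<union> groups AR BR. lg (card S))"
      using e2 fAL by (simp add: finite_groups)
    also have "(\<Sum>S\<in>groups AL BL \<union> groups AR BR. lg (card S)) =
       (\<Sum>S\<in>groups AL BL. lg (card S)) + (\<Sum>S\<in>groups AR BR. lg (card S))"
      using e1 fAL by (intro sum.union_disjoint) (auto simp: finite_groups)
    finally show ?thesis by simp
  qed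
  have s2: "(\<Sum>S\<in>groups B A. lg (card S)) =
      (\<Sum>S\<in>groups BL AL. lg (card S)) + (\<Sum>S\<in>groups BR AR. lg (card S))"
    unfolding g(2) using e3 fAL by (intro sum.union_disjoint) (auto simp: finite_groups)
  show ?thesis using s1 s2 by (simp add: PP_def)
qed


locale mh =
  fixes split :: "'k::linorder tree \<Rightarrow> 'k \<Rightarrow> 'k tree \<times> 'k tree"
    and join :: "'k tree \<Rightarrow> 'k tree \<Rightarrow> 'k tree"
    and scost :: "'k tree \<Rightarrow> 'k \<Rightarrow> real"
    and jcost :: "'k tree \<Rightarrow> 'k tree \<Rightarrow> real"
    and \<Phi> :: "'k tree \<Rightarrow> real"
    and c :: real
  assumes split_spec: "\<And>T k L R. bst T \<Longrightarrow> split T k = (L, R) \<Longrightarrow>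
             bst L \<and> bst R \<and> set_tree L = {x \<in> set_tree T. x < k} \<and> set_tree R = {x \<in> set_tree T. k < x}"
    and join_spec: "\<And>A B. bst A \<Longrightarrow> bst B \<Longrightarrow> (\<forall>x\<in>set_tree A. \<forall>y\<in>set_tree B. x < y) \<Longrightarrow>
             bst (join A B) \<and> set_tree (join A B) = set_tree A \<union> set_tree B"
    and pot_nonneg: "\<And>T. 0 \<le> \<Phi> T"
    and split_amortized: "\<And>T k L R. bst T \<Longrightarrow> split T k = (L, R) \<Longrightarrow>
             scost T k + \<Phi> L + \<Phi> R - \<Phi> T \<le> c * log 2 (real (min (size L) (size R)) + 1)"
    and join_amortized: "\<And>A B. bst A \<Longrightarrow> bst B \<Longrightarrow> (\<forall>x\<in>set_tree A. \<forall>y\<in>set_tree B. x < y) \<Longrightarrow>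
             jcost A B + \<Phi> (join A B) - \<Phi> A - \<Phi> B \<le> c * log 2 (real (min (size A) (size B)) + 1)"
begin

definition "cp = max c 0"
definition "A0 = 2 + 7 * cp"

lemma cp_nonneg: "0 \<le> cp" by (simp add: cp_def)

lemma c_le: "0 \<le> x \<Longrightarrow> c * x \<le> cp * x"
  by (simp add: cp_def mult_right_mono)

lemma amort_s: "bst T \<Longrightarrow> split T k = (L, R) \<Longrightarrow>
   scost T k + \<Phi> L + \<Phi> R - \<Phi> T \<le> cp * lg (min (card (set_tree L)) (card (set_tree R)))"
proof -
  assume a: "bst T" "split T k = (L, R)"
  hence "bst L" "bst R" using split_spec by blast+
  hence "c * log 2 (real (min (size L) (size R)) + 1) = c * lg (min (card (set_tree L)) (card (set_tree R)))"
    by (simp add: lg_def bst_size)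
  thus ?thesis using split_amortized[OF a] c_le[OF lg_nonneg] by smt
qed

lemma amort_j: "bst A \<Longrightarrow> bst B \<Longrightarrow> (\<forall>x\<in>set_tree A. \<forall>y\<in>set_tree B. x < y) \<Longrightarrow>
   jcost A B + \<Phi> (join A B) - \<Phi> A - \<Phi> B \<le> cp * lg (min (card (set_tree A)) (card (set_tree B)))"
proof -
  assume a: "bst A" "bst B" "(\<forall>x\<in>set_tree A. \<forall>y\<in>set_tree B. x < y)"
  hence "c * log 2 (real (min (size A) (size B)) + 1) = c * lg (min (card (set_tree A)) (card (set_tree B)))"
    by (simp add: lg_def bst_size)
  thus ?thesis using join_amortized[OF a] c_le[OF lg_nonneg] by smt
qed

lemma node_facts:
  assumes b1: "bst T1" and b2: "bst T2" and disj: "set_tree T1 \<inter> set_tree T2 = {}"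
    and T1: "T1 = Node l k r"
    and s1: "(L2, R2) = split T2 k"
    and s2: "(L1, I) = (if L2 = Leaf then (Leaf, T1) else split T1 (Max (set_tree L2)))"
    and c1: "c1 = (if L2 = Leaf then 0 else scost T1 (Max (set_tree L2)))"
    and s3: "(M, R1) = (if R2 = Leaf then (I, Leaf) else split I (Min (set_tree R2)))"
    and c2: "c2 = (if R2 = Leaf then 0 else scost I (Min (set_tree R2)))"
  shows "bst L2 \<and> bst R2 \<and> bst L1 \<and> bst I \<and> bst M \<and> bst R1"
    and "set_tree L2 = {x\<in>set_tree T2. x < k}" and "set_tree R2 = {x\<in>set_tree T2. k < x}"
    and "set_tree L1 = {x\<in>set_tree T1. set_tree L2 \<noteq> {} \<and> x < Max (set_tree L2)}"
    and "set_tree R1 = {x\<in>set_tree T1. set_tree R2 \<noteq> {} \<and> Min (set_tree R2) < x}"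
    and "set_tree M = {x\<in>set_tree T1. (set_tree L2 = {} \<or> Max (set_tree L2) < x) \<and>
                                      (set_tree R2 = {} \<or> x < Min (set_tree R2))}"
    and "set_tree I = set_tree M \<union> set_tree R1"
    and "set_tree T1 = set_tree L1 \<union> set_tree I"
    and "c1 + \<Phi> L1 + \<Phi> I - \<Phi> T1 \<le> cp * lg (min (card (set_tree L1)) (card (set_tree I)))
            + (if L2 = Leaf then \<Phi> Leaf else 0)"
    and "c2 + \<Phi> M + \<Phi> R1 - \<Phi> I \<le> cp * lg (min (card (set_tree M)) (card (set_tree R1)))
            + (if R2 = Leaf then \<Phi> Leaf else 0)"
proof -
  have kA: "k \<in> set_tree T1" using T1 by simp
  have sp2: "bst L2 \<and> bst R2 \<and> set_tree L2 = {x\<in>set_tree T2. x < k} \<and> set_tree R2 = {x\<in>set_tree T2. k < x}"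
    using split_spec[OF b2 s1[symmetric]] .
  have finL: "finite (set_tree L2)" and finR: "finite (set_tree R2)" by auto
  have MaxB: "L2 \<noteq> Leaf \<Longrightarrow> Max (set_tree L2) \<in> set_tree T2 \<and> Max (set_tree L2) < k"
  proof -
    assume "L2 \<noteq> Leaf"
    hence "Max (set_tree L2) \<in> set_tree L2" using finL by (intro Max_in) auto
    thus ?thesis using sp2 by blast
  qed
  have MinB: "R2 \<noteq> Leaf \<Longrightarrow> Min (set_tree R2) \<in> set_tree T2 \<and> k < Min (set_tree R2)"
  proof -
    assume "R2 \<noteq> Leaf"
    hence "Min (set_tree R2) \<in> set_tree R2" using finR by (intro Min_in) auto
    thus ?thesis using sp2 by blast
  qed
  have sI: "bst L1 \<and> bst I \<and> set_tree L1 = {x\<in>set_tree T1. set_tree L2 \<noteq> {} \<and> x < Max (set_tree L2)}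
         \<and> set_tree I = {x\<in>set_tree T1. set_tree L2 = {} \<or> Max (set_tree L2) < x}
         \<and> c1 + \<Phi> L1 + \<Phi> I - \<Phi> T1 \<le> cp * lg (min (card (set_tree L1)) (card (set_tree I)))
            + (if L2 = Leaf then \<Phi> Leaf else 0)"
  proof (cases "L2 = Leaf")
    case True
    hence "L1 = Leaf" "I = T1" "c1 = 0" using s2 c1 by auto
    thus ?thesis using b1 True by simp
  next
    case False
    hence sp: "split T1 (Max (set_tree L2)) = (L1, I)" using s2 by simp
    have nA: "Max (set_tree L2) \<notin> set_tree T1" using MaxB[OF False] disj by auto
    have "set_tree I = {x\<in>set_tree T1. Max (set_tree L2) < x}" using split_spec[OF b1 sp] by simp
    also have "\<dots> = {x\<in>set_tree T1. set_tree L2 = {} \<or> Max (set_tree L2) < x}" using False by simp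
    finally show ?thesis using split_spec[OF b1 sp] amort_s[OF b1 sp] False c1 by simp
  qed
  have bI: "bst I" using sI by blast
  have sM: "bst M \<and> bst R1 \<and> set_tree M = {x\<in>set_tree I. set_tree R2 = {} \<or> x < Min (set_tree R2)}
         \<and> set_tree R1 = {x\<in>set_tree I. set_tree R2 \<noteq> {} \<and> Min (set_tree R2) < x}
         \<and> c2 + \<Phi> M + \<Phi> R1 - \<Phi> I \<le> cp * lg (min (card (set_tree M)) (card (set_tree R1)))
            + (if R2 = Leaf then \<Phi> Leaf else 0)"
  proof (cases "R2 = Leaf")
    case True
    hence "M = I" "R1 = Leaf" "c2 = 0" using s3 c2 by auto
    thus ?thesis using bI True by simp
  next
    case False
    hence sp: "split I (Min (set_tree R2)) = (M, R1)" using s3 by simp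
    show ?thesis using split_spec[OF bI sp] amort_s[OF bI sp] False c2 by simp
  qed
  note bL1 = sI[THEN conjunct1] and bI' = sI[THEN conjunct2, THEN conjunct1]
    and sL1 = sI[THEN conjunct2, THEN conjunct2, THEN conjunct1]
    and sII = sI[THEN conjunct2, THEN conjunct2, THEN conjunct2, THEN conjunct1]
    and aI = sI[THEN conjunct2, THEN conjunct2, THEN conjunct2, THEN conjunct2]
  note bM = sM[THEN conjunct1] and bR1 = sM[THEN conjunct2, THEN conjunct1]
    and sMM = sM[THEN conjunct2, THEN conjunct2, THEN conjunct1]
    and sR1 = sM[THEN conjunct2, THEN conjunct2, THEN conjunct2, THEN conjunct1]
    and aM = sM[THEN conjunct2, THEN conjunct2, THEN conjunct2, THEN conjunct2]
  show "bst L2 \<and> bst R2 \<and> bst L1 \<and> bst I \<and> bst M \<and> bst R1" using sp2 bL1 bI bM bR1 by simp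
  show "set_tree L2 = {x\<in>set_tree T2. x < k}" "set_tree R2 = {x\<in>set_tree T2. k < x}" using sp2 by simp_all
  show "set_tree L1 = {x\<in>set_tree T1. set_tree L2 \<noteq> {} \<and> x < Max (set_tree L2)}" by (rule sL1)
  have o: "R2 \<noteq> Leaf \<Longrightarrow> L2 \<noteq> Leaf \<Longrightarrow> Max (set_tree L2) < Min (set_tree R2)"
    using MaxB MinB by (meson less_trans)
  show "set_tree R1 = {x\<in>set_tree T1. set_tree R2 \<noteq> {} \<and> Min (set_tree R2) < x}"
  proof (intro set_eqI iffI)
    fix x assume "x \<in> set_tree R1" thus "x \<in> {x\<in>set_tree T1. set_tree R2 \<noteq> {} \<and> Min (set_tree R2) < x}"
      unfolding sR1 sII by blast
  next
    fix x assume x: "x \<in> {x\<in>set_tree T1. set_tree R2 \<noteq> {} \<and> Min (set_tree R2) < x}"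
    have "set_tree L2 = {} \<or> Max (set_tree L2) < x"
    proof (cases "L2 = Leaf")
      case False
      moreover have "R2 \<noteq> Leaf" using x by auto
      ultimately have "Max (set_tree L2) < Min (set_tree R2)" using o by blast
      moreover have "Min (set_tree R2) < x" using x by blast
      ultimately show ?thesis by (meson less_trans)
    qed simp
    thus "x \<in> set_tree R1" using x unfolding sR1 sII by blast
  qed
  show "set_tree M = {x\<in>set_tree T1. (set_tree L2 = {} \<or> Max (set_tree L2) < x) \<and>
                                      (set_tree R2 = {} \<or> x < Min (set_tree R2))}"
    unfolding sMM sII by blast
  show "set_tree I = set_tree M \<union> set_tree R1"
  proof (intro set_eqI iffI)
    fix x assume x: "x \<in> set_tree I"
    show "x \<in> set_tree M \<union> set_tree R1"
    proof (cases "R2 = Leaf")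
      case False
      hence "x \<noteq> Min (set_tree R2)" using MinB x sII disj by blast
      thus ?thesis using x unfolding sMM sR1 by (auto simp: neq_iff)
    qed (use x sMM in simp)
  next
    fix x assume "x \<in> set_tree M \<union> set_tree R1" thus "x \<in> set_tree I" unfolding sMM sR1 by blast
  qed
  show "set_tree T1 = set_tree L1 \<union> set_tree I"
  proof (cases "L2 = Leaf")
    case True thus ?thesis unfolding sL1 sII by simp
  next
    case False
    hence "Max (set_tree L2) \<notin> set_tree T1" using MaxB disj by blast
    hence "\<And>x. x \<in> set_tree T1 \<Longrightarrow> x < Max (set_tree L2) \<or> Max (set_tree L2) < x"
      by (metis neq_iff)
    thus ?thesis unfolding sL1 sII using False by blast
  qed
  show "c1 + \<Phi> L1 + \<Phi> I - \<Phi> T1 \<le> cp * lg (min (card (set_tree L1)) (card (set_tree I)))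
            + (if L2 = Leaf then \<Phi> Leaf else 0)" by (rule aI)
  show "c2 + \<Phi> M + \<Phi> R1 - \<Phi> I \<le> cp * lg (min (card (set_tree M)) (card (set_tree R1)))
            + (if R2 = Leaf then \<Phi> Leaf else 0)" by (rule aM)
qed

end
context mh begin

lemma exists_run: "bst T1 \<Longrightarrow> bst T2 \<Longrightarrow> set_tree T1 \<inter> set_tree T2 = {} \<Longrightarrow>
   \<exists>T w. mergeHT_run split join scost jcost T1 T2 T w"
proof (induction "size T1 + size T2" arbitrary: T1 T2 rule: less_induct)
  case less
  show ?case
  proof (cases "T1 = Leaf")
    case True thus ?thesis using mergeHT_run.empty1 by blast
  next
    case F1: False
    show ?thesis
    proof (cases "T2 = Leaf")
      case True thus ?thesis using F1 mergeHT_run.empty2 by blast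
    next
      case F2: False
      obtain l k r where T1: "T1 = Node l k r" using F1 by (cases T1) auto
      obtain L2 R2 where s1: "(L2, R2) = split T2 k" by (metis surj_pair)
      obtain L1 I where s2: "(L1, I) = (if L2 = Leaf then (Leaf, T1) else split T1 (Max (set_tree L2)))"
        by (metis surj_pair)
      define c1 where "c1 = (if L2 = Leaf then 0 else scost T1 (Max (set_tree L2)))"
      obtain M R1 where s3: "(M, R1) = (if R2 = Leaf then (I, Leaf) else split I (Min (set_tree R2)))"
        by (metis surj_pair)
      define c2 where "c2 = (if R2 = Leaf then 0 else scost I (Min (set_tree R2)))"
      note nf = node_facts[OF less.prems T1 s1 s2 c1_def s3 c2_def]
      have kA: "k \<in> set_tree T1" using T1 by simp
      have sz1: "size T1 = card (set_tree T1)" "size T2 = card (set_tree T2)"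
        using less.prems bst_size by auto
      have szL: "size L1 = card (set_tree L1)" "size L2 = card (set_tree L2)"
        "size R1 = card (set_tree R1)" "size R2 = card (set_tree R2)"
        using nf(1) bst_size by auto
      have kL1: "k \<notin> set_tree L1"
      proof
        assume "k \<in> set_tree L1"
        hence ne: "set_tree L2 \<noteq> {}" and km: "k < Max (set_tree L2)" using nf(4) by blast+
        from ne have "L2 \<noteq> Leaf" by simp
        moreover have "Max (set_tree L2) \<in> set_tree L2" using \<open>L2 \<noteq> Leaf\<close> by (intro Max_in) auto
        ultimately show False using nf(2) km by (metis (no_types, lifting) mem_Collect_eq less_asym)
      qed
      have kR1: "k \<notin> set_tree R1"
      proof
        assume "k \<in> set_tree R1"
        hence ne: "set_tree R2 \<noteq> {}" and km: "Min (set_tree R2) < k" using nf(5) by blast+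
        from ne have "R2 \<noteq> Leaf" by simp
        moreover have "Min (set_tree R2) \<in> set_tree R2" using \<open>R2 \<noteq> Leaf\<close> by (intro Min_in) auto
        ultimately show False using nf(3) km by (metis (no_types, lifting) mem_Collect_eq less_asym)
      qed
      have subL1: "set_tree L1 \<subset> set_tree T1" using nf(4) kA kL1 by blast
      have subR1: "set_tree R1 \<subset> set_tree T1" using nf(5) kA kR1 by blast
      have subL2: "set_tree L2 \<subseteq> set_tree T2" and subR2: "set_tree R2 \<subseteq> set_tree T2"
        using nf(2,3) by blast+
      have "card (set_tree L1) < card (set_tree T1)" using subL1 by (intro psubset_card_mono) auto
      moreover have "card (set_tree L2) \<le> card (set_tree T2)" using subL2 by (intro card_mono) auto
      ultimately have lt1: "size L1 + size L2 < size T1 + size T2" using sz1 szL by linarith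
      have "card (set_tree R1) < card (set_tree T1)" using subR1 by (intro psubset_card_mono) auto
      moreover have "card (set_tree R2) \<le> card (set_tree T2)" using subR2 by (intro card_mono) auto
      ultimately have lt2: "size R1 + size R2 < size T1 + size T2" using sz1 szL by linarith
      have d1: "set_tree L1 \<inter> set_tree L2 = {}" using subL1 subL2 less.prems(3) by blast
      have d2: "set_tree R1 \<inter> set_tree R2 = {}" using subR1 subR2 less.prems(3) by blast
      obtain TL wL where rL: "mergeHT_run split join scost jcost L1 L2 TL wL"
        using less.hyps[OF lt1] nf(1) d1 by blast
      obtain TR wR where rR: "mergeHT_run split join scost jcost R1 R2 TR wR"
        using less.hyps[OF lt2] nf(1) d2 by blast
      show ?thesis using mergeHT_run.node[OF T1 F2 s1 s2 c1_def s3 c2_def rL rR] by blast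
    qed
  qed
qed

lemma A0_ge: "2 * cp \<le> A0" using cp_nonneg by (simp add: A0_def)

lemma main_run:
  "mergeHT_run split join scost jcost T1 T2 T w \<Longrightarrow> bst T1 \<Longrightarrow> bst T2 \<Longrightarrow>
   set_tree T1 \<inter> set_tree T2 = {} \<Longrightarrow>
   bst T \<and> set_tree T = set_tree T1 \<union> set_tree T2 \<and>
   w + \<Phi> T - \<Phi> T1 - \<Phi> T2 \<le> A0 * PP (set_tree T1) (set_tree T2) + 1 - \<Phi> Leaf
     - cp * (lg (card (set_tree T1)) + lg (card (set_tree T2)) + lg (card (set_tree T1) + card (set_tree T2)))"
proof (induction rule: mergeHT_run.induct)
  case (empty1 T2)
  have "2 * cp * lg (card (set_tree T2)) \<le> A0 * lg (card (set_tree T2))"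
    by (rule mult_right_mono[OF A0_ge lg_nonneg])
  thus ?case using empty1 by (simp add: PP_empty1)
next
  case (empty2 T1)
  have "2 * cp * lg (card (set_tree T1)) \<le> A0 * lg (card (set_tree T1))"
    by (rule mult_right_mono[OF A0_ge lg_nonneg])
  thus ?case using empty2 by (simp add: PP_empty2)
next
  case (node T1 l k r T2 L2 R2 L1 I c1 M R1 c2 TL wL TR wR)
  note nf = node_facts[OF node.prems node.hyps(1,3,4,5,6,7)]
  define A where "A = set_tree T1"
  define B where "B = set_tree T2"
  have kA: "k \<in> A" using node.hyps(1) A_def by simp
  have disj: "A \<inter> B = {}" using node.prems A_def B_def by simp
  have bsts: "bst L2" "bst R2" "bst L1" "bst I" "bst M" "bst R1" using nf(1) by auto
  have BL: "set_tree L2 = {x\<in>B. x < k}" and BR: "set_tree R2 = {x\<in>B. k < x}" using nf(2,3) B_def by auto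
  have AL: "set_tree L1 = {x\<in>A. set_tree L2 \<noteq> {} \<and> x < Max (set_tree L2)}" using nf(4) A_def by simp
  have AR: "set_tree R1 = {x\<in>A. set_tree R2 \<noteq> {} \<and> Min (set_tree R2) < x}" using nf(5) A_def by simp
  have AM: "set_tree M = {x\<in>A. (set_tree L2 = {} \<or> Max (set_tree L2) < x) \<and>
                                      (set_tree R2 = {} \<or> x < Min (set_tree R2))}" using nf(6) A_def by simp
  have sI: "set_tree I = set_tree M \<union> set_tree R1" using nf(7) .
  have sA: "A = set_tree L1 \<union> set_tree I" using nf(8) A_def by simp
  have kB: "k \<notin> B" using kA disj by auto
  have sB: "B = set_tree L2 \<union> set_tree R2"
  proof -
    have "\<And>x. x \<in> B \<Longrightarrow> x < k \<or> k < x" using kB by (metis neq_iff)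
    thus ?thesis unfolding BL BR by blast
  qed
  have finL: "finite (set_tree L2)" and finR: "finite (set_tree R2)" by auto
  have MaxB: "L2 \<noteq> Leaf \<Longrightarrow> Max (set_tree L2) \<in> set_tree L2 \<and> (\<forall>x\<in>set_tree L2. x \<le> Max (set_tree L2)) \<and> Max (set_tree L2) < k"
  proof -
    assume "L2 \<noteq> Leaf"
    hence "Max (set_tree L2) \<in> set_tree L2" using finL by (intro Max_in) auto
    moreover have "\<forall>x\<in>set_tree L2. x \<le> Max (set_tree L2)" using finL by simp
    ultimately show ?thesis using BL by blast
  qed
  have MinB: "R2 \<noteq> Leaf \<Longrightarrow> Min (set_tree R2) \<in> set_tree R2 \<and> (\<forall>x\<in>set_tree R2. Min (set_tree R2) \<le> x) \<and> k < Min (set_tree R2)"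
  proof -
    assume "R2 \<noteq> Leaf"
    hence "Min (set_tree R2) \<in> set_tree R2" using finR by (intro Min_in) auto
    moreover have "\<forall>x\<in>set_tree R2. Min (set_tree R2) \<le> x" using finR by simp
    ultimately show ?thesis using BR by blast
  qed
  have kM: "k \<in> set_tree M"
  proof -
    have "set_tree L2 = {} \<or> Max (set_tree L2) < k"
    proof (cases "L2 = Leaf")
      case False thus ?thesis using MaxB by blast
    qed simp
    moreover have "set_tree R2 = {} \<or> k < Min (set_tree R2)"
    proof (cases "R2 = Leaf")
      case False thus ?thesis using MinB by blast
    qed simp
    ultimately show ?thesis using AM kA by blast
  qed
  have dLI: "set_tree L1 \<inter> set_tree I = {}"
  proof -
    have "set_tree I \<subseteq> A" using sA by blast
    have "\<And>x. x \<in> set_tree L1 \<Longrightarrow> x \<in> set_tree I \<Longrightarrow> False"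
    proof -
      fix x assume x1: "x \<in> set_tree L1" and x2: "x \<in> set_tree I"
      have ne: "set_tree L2 \<noteq> {}" and lt: "x < Max (set_tree L2)" using x1 AL by blast+
      have "x \<in> set_tree M \<or> x \<in> set_tree R1" using x2 sI by blast
      thus False
      proof
        assume "x \<in> set_tree M"
        hence "Max (set_tree L2) < x" using AM ne by blast
        thus False using lt by simp
      next
        assume "x \<in> set_tree R1"
        hence "set_tree R2 \<noteq> {}" and mx: "Min (set_tree R2) < x" using AR by blast+
        hence "R2 \<noteq> Leaf" by simp
        moreover have "L2 \<noteq> Leaf" using ne by simp
        ultimately show False using MaxB MinB lt mx by (meson less_trans less_asym)
      qed
    qed
    thus ?thesis by blast
  qed
  have dMR: "set_tree M \<inter> set_tree R1 = {}"
  proof -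
    have "\<And>x. x \<in> set_tree M \<Longrightarrow> x \<in> set_tree R1 \<Longrightarrow> False"
    proof -
      fix x assume "x \<in> set_tree M" "x \<in> set_tree R1"
      hence "Min (set_tree R2) < x" "x < Min (set_tree R2)" using AM AR by blast+
      thus False by simp
    qed
    thus ?thesis by blast
  qed
  have dLR2: "set_tree L2 \<inter> set_tree R2 = {}" unfolding BL BR by auto
  have subs: "set_tree L1 \<subseteq> A" "set_tree R1 \<subseteq> A" "set_tree M \<subseteq> A" "set_tree L2 \<subseteq> B" "set_tree R2 \<subseteq> B"
    using sA sI sB by blast+
  have d1: "set_tree L1 \<inter> set_tree L2 = {}" using subs disj by blast
  have d2: "set_tree R1 \<inter> set_tree R2 = {}" using subs disj by blast
  have ihL: "bst TL \<and> set_tree TL = set_tree L1 \<union> set_tree L2 \<and>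
     wL + \<Phi> TL - \<Phi> L1 - \<Phi> L2 \<le> A0 * PP (set_tree L1) (set_tree L2) + 1 - \<Phi> Leaf
     - cp * (lg (card (set_tree L1)) + lg (card (set_tree L2)) + lg (card (set_tree L1) + card (set_tree L2)))"
    using node.IH(1) bsts d1 by blast
  have ihR: "bst TR \<and> set_tree TR = set_tree R1 \<union> set_tree R2 \<and>
     wR + \<Phi> TR - \<Phi> R1 - \<Phi> R2 \<le> A0 * PP (set_tree R1) (set_tree R2) + 1 - \<Phi> Leaf
     - cp * (lg (card (set_tree R1)) + lg (card (set_tree R2)) + lg (card (set_tree R1) + card (set_tree R2)))"
    using node.IH(2) bsts d2 by blast
  have bTL: "bst TL" and sTL: "set_tree TL = set_tree L1 \<union> set_tree L2" using ihL by blast+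
  have bTR: "bst TR" and sTR: "set_tree TR = set_tree R1 \<union> set_tree R2" using ihR by blast+
  have L1lt: "\<And>x. x \<in> set_tree L1 \<Longrightarrow> L2 \<noteq> Leaf \<and> x < Max (set_tree L2)"
  proof -
    fix x assume "x \<in> set_tree L1"
    hence "set_tree L2 \<noteq> {} \<and> x < Max (set_tree L2)" using AL by blast
    thus "L2 \<noteq> Leaf \<and> x < Max (set_tree L2)" by (metis eq_set_tree_empty)
  qed
  have R1gt: "\<And>x. x \<in> set_tree R1 \<Longrightarrow> R2 \<noteq> Leaf \<and> Min (set_tree R2) < x"
  proof -
    fix x assume "x \<in> set_tree R1"
    hence "set_tree R2 \<noteq> {} \<and> Min (set_tree R2) < x" using AR by blast
    thus "R2 \<noteq> Leaf \<and> Min (set_tree R2) < x" by (metis eq_set_tree_empty)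
  qed
  have Mbnd: "\<And>x. x \<in> set_tree M \<Longrightarrow> (L2 \<noteq> Leaf \<longrightarrow> Max (set_tree L2) < x) \<and> (R2 \<noteq> Leaf \<longrightarrow> x < Min (set_tree R2))"
  proof -
    fix x assume "x \<in> set_tree M"
    hence "(set_tree L2 = {} \<or> Max (set_tree L2) < x) \<and> (set_tree R2 = {} \<or> x < Min (set_tree R2))"
      using AM by blast
    thus "(L2 \<noteq> Leaf \<longrightarrow> Max (set_tree L2) < x) \<and> (R2 \<noteq> Leaf \<longrightarrow> x < Min (set_tree R2))"
      by (metis eq_set_tree_empty)
  qed
  have L2le: "\<And>x. x \<in> set_tree L2 \<Longrightarrow> L2 \<noteq> Leaf \<and> x \<le> Max (set_tree L2) \<and> x < k"
  proof -
    fix x assume x: "x \<in> set_tree L2"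
    hence ne: "L2 \<noteq> Leaf" by auto
    thus "L2 \<noteq> Leaf \<and> x \<le> Max (set_tree L2) \<and> x < k" using MaxB[OF ne] x by (meson le_less_trans)
  qed
  have R2ge: "\<And>x. x \<in> set_tree R2 \<Longrightarrow> R2 \<noteq> Leaf \<and> Min (set_tree R2) \<le> x \<and> k < x"
  proof -
    fix x assume x: "x \<in> set_tree R2"
    hence ne: "R2 \<noteq> Leaf" by auto
    thus "R2 \<noteq> Leaf \<and> Min (set_tree R2) \<le> x \<and> k < x" using MinB[OF ne] x by (meson less_le_trans)
  qed
  have ord1: "\<forall>x\<in>set_tree TL. \<forall>y\<in>set_tree M. x < y"
  proof (intro ballI)
    fix x y assume x: "x \<in> set_tree TL" and y: "y \<in> set_tree M"
    have "x \<in> set_tree L1 \<or> x \<in> set_tree L2" using x sTL by simp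
    thus "x < y"
    proof
      assume "x \<in> set_tree L1"
      thus "x < y" using L1lt Mbnd[OF y] by (meson less_trans)
    next
      assume "x \<in> set_tree L2"
      thus "x < y" using L2le Mbnd[OF y] by (meson le_less_trans)
    qed
  qed
  define J where "J = join TL M"
  have jJ: "bst J \<and> set_tree J = set_tree TL \<union> set_tree M" using join_spec[OF bTL bsts(5) ord1] J_def by simp
  have ord2: "\<forall>x\<in>set_tree J. \<forall>y\<in>set_tree TR. x < y"
  proof (intro ballI)
    fix x y assume x: "x \<in> set_tree J" and y: "y \<in> set_tree TR"
    have yy: "y \<in> set_tree R1 \<or> y \<in> set_tree R2" using y sTR by simp
    have ne: "R2 \<noteq> Leaf" using yy R1gt R2ge by blast
    have my: "Min (set_tree R2) \<le> y" using yy R1gt R2ge by (meson less_imp_le)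
    have xx: "x \<in> set_tree L1 \<or> x \<in> set_tree L2 \<or> x \<in> set_tree M" using x jJ sTL by simp
    have km: "k < Min (set_tree R2)" using MinB[OF ne] by blast
    have "x < Min (set_tree R2)"
      using xx L1lt L2le Mbnd MaxB km ne by (meson less_trans)
    thus "x < y" using my by simp
  qed
  have jT: "bst (join J TR) \<and> set_tree (join J TR) = set_tree J \<union> set_tree TR"
    using join_spec[OF _ bTR ord2] jJ by blast
  define a where "a = card (set_tree L1)"
  define p where "p = card (set_tree L2)"
  define m where "m = card (set_tree M)"
  define r where "r = card (set_tree R1)"
  define q where "q = card (set_tree R2)"
  have cI: "card (set_tree I) = m + r" using sI dMR by (simp add: m_def r_def card_Un_disjoint)
  have cA: "card A = a + m + r" using sA dLI cI by (simp add: a_def card_Un_disjoint)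
  have cB: "card B = p + q" using sB dLR2 by (simp add: p_def q_def card_Un_disjoint)
  have cTL: "card (set_tree TL) = a + p" using sTL d1 by (simp add: a_def p_def card_Un_disjoint)
  have dTLM: "set_tree TL \<inter> set_tree M = {}" using ord1 by blast
  have cJ: "card (set_tree J) = a + p + m" using jJ dTLM cTL by (simp add: m_def card_Un_disjoint)
  have cTR: "card (set_tree TR) = r + q" using sTR d2 by (simp add: r_def q_def card_Un_disjoint)
  have s1a: "scost T2 k + \<Phi> L2 + \<Phi> R2 - \<Phi> T2 \<le> cp * lg (min p q)"
    using amort_s[OF node.prems(2) node.hyps(3)[symmetric]] by (simp add: p_def q_def)
  have c1a: "c1 + \<Phi> L1 + \<Phi> I - \<Phi> T1 \<le> cp * lg (min a (m + r)) + (if L2 = Leaf then \<Phi> Leaf else 0)"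
    using nf(9) cI by (simp add: a_def)
  have c2a: "c2 + \<Phi> M + \<Phi> R1 - \<Phi> I \<le> cp * lg (min m r) + (if R2 = Leaf then \<Phi> Leaf else 0)"
    using nf(10) by (simp add: m_def r_def)
  have j1: "jcost TL M + \<Phi> J - \<Phi> TL - \<Phi> M \<le> cp * lg (min (a + p) m)"
    using amort_j[OF bTL bsts(5) ord1] cTL by (simp add: J_def m_def)
  have j2: "jcost J TR + \<Phi> (join J TR) - \<Phi> J - \<Phi> TR \<le> cp * lg (min (a + p + m) (r + q))"
    using amort_j[OF _ bTR ord2] jJ cJ cTR by simp
  have PPd: "PP A B = PP (set_tree L1) (set_tree L2) + PP (set_tree R1) (set_tree R2) + lg m"
    unfolding m_def by (rule PP_decomp[OF _ _ disj kA BL BR AL AR AM]) (auto simp: A_def B_def)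
  have Bne: "B \<noteq> {}" using node.hyps(2) B_def by simp
  have leafc: "(if L2 = Leaf then \<Phi> Leaf else 0) + (if R2 = Leaf then \<Phi> Leaf else 0) \<le> \<Phi> Leaf"
  proof -
    have "\<not> (L2 = Leaf \<and> R2 = Leaf)" using Bne sB by auto
    thus ?thesis using pot_nonneg[of Leaf] by auto
  qed
  have m1: "1 \<le> m" using kM unfolding m_def by (metis One_nat_def Suc_leI card_gt_0_iff finite_set_tree empty_iff)
  have lm1: "1 \<le> lg m" by (rule lg_ge1[OF m1])
  have k1: "lg (min p q) + lg (p + q) \<le> lg p + lg q + 1" using lg_key3[of p 0 q] by simp
  have k2: "lg (min a (m + r)) + lg (a + m + r) \<le> lg a + lg m + lg r + 1"
    using lg_key3[of m r a] by (simp add: min.commute add_ac)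
  have k3: "lg (min (a + p + m) (r + q)) + lg (a + m + r + (p + q)) \<le> lg (a + p) + lg m + lg (r + q) + 1"
  proof -
    have e: "a + p + m + (r + q) = a + m + r + (p + q)" by simp
    show ?thesis using lg_key3[of "a + p" m "r + q"] unfolding e .
  qed
  have k4: "lg (min m r) \<le> lg m" "lg (min (a + p) m) \<le> lg m" by (auto intro: lg_mono)
  define X where "X = lg (min p q) + lg (min a (m + r)) + lg (min m r) + lg (min (a + p) m)
      + lg (min (a + p + m) (r + q)) + lg (a + m + r) + lg (p + q) + lg (a + m + r + (p + q))
      - (lg a + lg p + lg (a + p) + lg r + lg q + lg (r + q))"
  have KX: "X \<le> 3 + 4 * lg m" unfolding X_def using k1 k2 k3 k4 by linarith
  have cX: "cp * X \<le> cp * (3 + 4 * lg m)" by (rule mult_left_mono[OF KX cp_nonneg])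
  have cm: "cp \<le> cp * lg m" using mult_left_mono[OF lm1 cp_nonneg] by simp
  have Am: "A0 * lg m = 2 * lg m + 7 * (cp * lg m)" by (simp add: A0_def algebra_simps)
  have ihLb: "wL + \<Phi> TL - \<Phi> L1 - \<Phi> L2 \<le> A0 * PP (set_tree L1) (set_tree L2) + 1 - \<Phi> Leaf
     - cp * (lg a + lg p + lg (a + p))" using ihL by (simp add: a_def p_def)
  have ihRb: "wR + \<Phi> TR - \<Phi> R1 - \<Phi> R2 \<le> A0 * PP (set_tree R1) (set_tree R2) + 1 - \<Phi> Leaf
     - cp * (lg r + lg q + lg (r + q))" using ihR by (simp add: r_def q_def)
  have fin: "(1 + scost T2 k + c1 + c2 + wL + wR + jcost TL M + jcost J TR) + \<Phi> (join J TR) - \<Phi> T1 - \<Phi> T2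
     \<le> A0 * PP A B + 1 - \<Phi> Leaf - cp * (lg (card A) + lg (card B) + lg (card A + card B))"
  proof -
    have e1: "cp * X = cp * lg (min p q) + cp * lg (min a (m + r)) + cp * lg (min m r) + cp * lg (min (a + p) m)
      + cp * lg (min (a + p + m) (r + q)) + cp * lg (a + m + r) + cp * lg (p + q) + cp * lg (a + m + r + (p + q))
      - (cp * lg a + cp * lg p + cp * lg (a + p) + cp * lg r + cp * lg q + cp * lg (r + q))"
      unfolding X_def by (simp add: algebra_simps)
    have e2: "cp * (lg (card A) + lg (card B) + lg (card A + card B)) = cp * lg (a + m + r) + cp * lg (p + q) + cp * lg (a + m + r + (p + q))"
      using cA cB by (simp add: algebra_simps)
    have e3: "A0 * PP A B = A0 * PP (set_tree L1) (set_tree L2) + A0 * PP (set_tree R1) (set_tree R2) + A0 * lg m"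
      using PPd by (simp add: algebra_simps)
    have e4: "cp * (lg a + lg p + lg (a + p)) = cp * lg a + cp * lg p + cp * lg (a + p)" by (simp add: algebra_simps)
    have e5: "cp * (lg r + lg q + lg (r + q)) = cp * lg r + cp * lg q + cp * lg (r + q)" by (simp add: algebra_simps)
    have e6: "cp * (3 + 4 * lg m) = 3 * cp + 4 * (cp * lg m)" by (simp add: algebra_simps)
    show ?thesis using s1a c1a c2a j1 j2 ihLb ihRb leafc cX cm Am lm1 e1 e2 e3 e4 e5 e6 by linarith
  qed
  have sT: "set_tree (join J TR) = A \<union> B" using jT jJ sTL sTR sA sI sB by blast
  show ?case using fin jT sT unfolding J_def A_def B_def by simp
qed

end

theorem lemma9:
  fixes split :: "'k::linorder tree \<Rightarrow> 'k \<Rightarrow> 'k tree \<times> 'k tree"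
    and join :: "'k tree \<Rightarrow> 'k tree \<Rightarrow> 'k tree"
    and scost :: "'k tree \<Rightarrow> 'k \<Rightarrow> real"
    and jcost :: "'k tree \<Rightarrow> 'k tree \<Rightarrow> real"
    and \<Phi> :: "'k tree \<Rightarrow> real"
    and c :: real
  assumes split_spec: "\<And>T k L R. bst T \<Longrightarrow> split T k = (L, R) \<Longrightarrow>
             bst L \<and> bst R \<and> set_tree L = {x \<in> set_tree T. x < k} \<and> set_tree R = {x \<in> set_tree T. k < x}"
    and join_spec: "\<And>A B. bst A \<Longrightarrow> bst B \<Longrightarrow> (\<forall>x\<in>set_tree A. \<forall>y\<in>set_tree B. x < y) \<Longrightarrow>
             bst (join A B) \<and> set_tree (join A B) = set_tree A \<union> set_tree B"
    and pot_nonneg: "\<And>T. 0 \<le> \<Phi> T"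
    and scost_nonneg: "\<And>T k. 0 \<le> scost T k"
    and jcost_nonneg: "\<And>A B. 0 \<le> jcost A B"
    and split_amortized: "\<And>T k L R. bst T \<Longrightarrow> split T k = (L, R) \<Longrightarrow>
             scost T k + \<Phi> L + \<Phi> R - \<Phi> T \<le> c * log 2 (real (min (size L) (size R)) + 1)"
    and join_amortized: "\<And>A B. bst A \<Longrightarrow> bst B \<Longrightarrow> (\<forall>x\<in>set_tree A. \<forall>y\<in>set_tree B. x < y) \<Longrightarrow>
             jcost A B + \<Phi> (join A B) - \<Phi> A - \<Phi> B \<le> c * log 2 (real (min (size A) (size B)) + 1)"
  shows "(\<forall>T1 T2. bst T1 \<longrightarrow> bst T2 \<longrightarrow> set_tree T1 \<inter> set_tree T2 = {} \<longrightarrow>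
            (\<exists>T w. mergeHT_run split join scost jcost T1 T2 T w)) \<and>
         (\<exists>C>0. \<forall>T1 T2 T w. bst T1 \<longrightarrow> bst T2 \<longrightarrow> set_tree T1 \<inter> set_tree T2 = {} \<longrightarrow>
            mergeHT_run split join scost jcost T1 T2 T w \<longrightarrow>
              bst T \<and> set_tree T = set_tree T1 \<union> set_tree T2 \<and>
              w + \<Phi> T - \<Phi> T1 - \<Phi> T2 \<le>
                C * (1 + (\<Sum>S\<in>groups (set_tree T1) (set_tree T2). log 2 (real (card S) + 1))
                       + (\<Sum>S\<in>groups (set_tree T2) (set_tree T1). log 2 (real (card S) + 1))))"
proof -
  interpret mh split join scost jcost \<Phi> c
    by (rule mh.intro[OF split_spec join_spec pot_nonneg split_amortized join_amortized])
  show ?thesis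
  proof (intro conjI)
    show "\<forall>T1 T2. bst T1 \<longrightarrow> bst T2 \<longrightarrow> set_tree T1 \<inter> set_tree T2 = {} \<longrightarrow>
            (\<exists>T w. mergeHT_run split join scost jcost T1 T2 T w)"
      using exists_run by blast
    have A0nn: "0 \<le> A0" using cp_nonneg by (simp add: A0_def)
    show "\<exists>C>0. \<forall>T1 T2 T w. bst T1 \<longrightarrow> bst T2 \<longrightarrow> set_tree T1 \<inter> set_tree T2 = {} \<longrightarrow>
            mergeHT_run split join scost jcost T1 T2 T w \<longrightarrow>
              bst T \<and> set_tree T = set_tree T1 \<union> set_tree T2 \<and>
              w + \<Phi> T - \<Phi> T1 - \<Phi> T2 \<le>
                C * (1 + (\<Sum>S\<in>groups (set_tree T1) (set_tree T2). log 2 (real (card S) + 1))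
                       + (\<Sum>S\<in>groups (set_tree T2) (set_tree T1). log 2 (real (card S) + 1)))"
    proof (intro exI[of _ "A0 + 1"] conjI allI impI)
      show "0 < A0 + 1" using A0nn by simp
      fix T1 T2 T w
      assume h: "bst T1" "bst T2" "set_tree T1 \<inter> set_tree T2 = {}"
        "mergeHT_run split join scost jcost T1 T2 T w"
      note mr = main_run[OF h(4) h(1) h(2) h(3)]
      show "bst T" "set_tree T = set_tree T1 \<union> set_tree T2" using mr by blast+
      define P where "P = PP (set_tree T1) (set_tree T2)"
      have Peq: "(1 + (\<Sum>S\<in>groups (set_tree T1) (set_tree T2). log 2 (real (card S) + 1))
                       + (\<Sum>S\<in>groups (set_tree T2) (set_tree T1). log 2 (real (card S) + 1))) = 1 + P"
        by (simp add: P_def PP_def lg_def)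
      have P0: "0 \<le> P" unfolding P_def by (rule PP_nonneg)
      have cl: "0 \<le> cp * (lg (card (set_tree T1)) + lg (card (set_tree T2)) + lg (card (set_tree T1) + card (set_tree T2)))"
        using cp_nonneg lg_nonneg by (simp add: add_nonneg_nonneg)
      have b: "w + \<Phi> T - \<Phi> T1 - \<Phi> T2 \<le> A0 * P + 1" using mr cl pot_nonneg[of Leaf] unfolding P_def by linarith
      have "A0 * P + 1 \<le> (A0 + 1) * (1 + P)" using A0nn P0 by (simp add: algebra_simps)
      thus "w + \<Phi> T - \<Phi> T1 - \<Phi> T2 \<le>
                (A0 + 1) * (1 + (\<Sum>S\<in>groups (set_tree T1) (set_tree T2). log 2 (real (card S) + 1))
                       + (\<Sum>S\<in>groups (set_tree T2) (set_tree T1). log 2 (real (card S) + 1)))"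
        using b unfolding Peq by linarith
    qed
  qed
qed

end
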